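(* Let $(X,P,o)$ be a generalized parametric metric space such that $P$ satisfies (P5) and $o$ is continuous. Then every open ball $B(a,\alpha,t)$ ($a\in X$, $\alpha>0$, $t>0$) belongs to $\tau_P$.
   Context: A binary operation $o:[0,\infty)\times[0,\infty)\to[0,\infty)$ (written $\alpha\, o\, \beta$) is assumed to satisfy, for all $\alpha,\beta,\gamma\in[0,\infty)$: (a) $\alpha\, o\, 0=\alpha$; (b) $\alpha\le\beta\implies \alpha\, o\,\gamma\le\beta\, o\,\gamma$; (c) $\alpha\, o\,\gamma=\gamma\, o\,\alpha$; (d) $\alpha\, o\,(\beta\, o\,\gamma)=(\alpha\, o\,\beta)\, o\,\gamma$. It is continuous if whenever $\alpha_n\to\alpha$ and $\beta_n\to\beta$ in $[0,\infty)$ we have $\alpha_n\, o\,\beta_n\to\alpha\, o\,\beta$. A generalized parametric metric on a nonempty set $X$ is a function $P:X\times X\times(0,\infty)\to[0,\infty)$ such that: (P1) $P(a,b,t)=0$ for all $t>0$ if and only if $a=b$; (P2) $P(a,b,t)=P(b,a,t)$ for all $a,b\in X$, $t>0$; (P3) $P(a,b,s+t)\le P(a,x,s)\, o\, P(b,x,t)$ for all $s,t>0$ and $a,b,x\in X$. The triple $(X,P,o)$ is a generalized parametric metric space. Condition (P5): for all $a,b\in X$, the map $t\mapsto P(a,b,t)$ is continuous on $(0,\infty)$. Open ball: $B(a,\alpha,t)=\{b\in X: P(a,b,t)<\alpha\}$. $\tau_P$ is the topology consisting of all $A\subseteq X$ such that for every $a\in A$ there exist $\alpha>0,t>0$ with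 $B(a,\alpha,t)\subseteq A$. *)

theory Defs
  imports "HOL-Analysis.Analysis"
begin

text \<open>A binary operation o on [0,oo), represented as a real function whose
behaviour matters only on nonnegative arguments.\<close>
definition gen_op :: "(real \<Rightarrow> real \<Rightarrow> real) \<Rightarrow> bool" where
  "gen_op opr \<longleftrightarrow>
     (\<forall>a\<ge>0. \<forall>b\<ge>0. opr a b \<ge> 0) \<and>
     (\<forall>a\<ge>0. opr a 0 = a) \<and>
     (\<forall>a\<ge>0. \<forall>b\<ge>0. \<forall>c\<ge>0. a \<le> b \<longrightarrow> opr a c \<le> opr b c) \<and>
     (\<forall>a\<ge>0. \<forall>c\<ge>0. opr a c = opr c a) \<and>
     (\<forall>a\<ge>0. \<forall>b\<ge>0. \<forall>c\<ge>0. opr a (opr b c) = opr (opr a b) c)"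

definition op_continuous :: "(real \<Rightarrow> real \<Rightarrow> real) \<Rightarrow> bool" where
  "op_continuous opr \<longleftrightarrow>
     (\<forall>an bn a b. (\<forall>n. an n \<ge> 0) \<longrightarrow> (\<forall>n. bn n \<ge> 0) \<longrightarrow> a \<ge> 0 \<longrightarrow> b \<ge> 0 \<longrightarrow>
        an \<longlonglongrightarrow> a \<longrightarrow> bn \<longlonglongrightarrow> b \<longrightarrow> (\<lambda>n. opr (an n) (bn n)) \<longlonglongrightarrow> opr a b)"

text \<open>Generalized parametric metric on X; only values at t > 0 matter.\<close>
definition gen_parametric_metric ::
  "'a set \<Rightarrow> ('a \<Rightarrow> 'a \<Rightarrow> real \<Rightarrow> real) \<Rightarrow> (real \<Rightarrow> real \<Rightarrow> real) \<Rightarrow> bool" where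
  "gen_parametric_metric X P opr \<longleftrightarrow>
     X \<noteq> {} \<and> gen_op opr \<and>
     (\<forall>a\<in>X. \<forall>b\<in>X. \<forall>t>0. P a b t \<ge> 0) \<and>
     (\<forall>a\<in>X. \<forall>b\<in>X. (\<forall>t>0. P a b t = 0) \<longleftrightarrow> a = b) \<and>
     (\<forall>a\<in>X. \<forall>b\<in>X. \<forall>t>0. P a b t = P b a t) \<and>
     (\<forall>a\<in>X. \<forall>b\<in>X. \<forall>x\<in>X. \<forall>s>0. \<forall>t>0. P a b (s + t) \<le> opr (P a x s) (P b x t))"

definition P5 :: "'a set \<Rightarrow> ('a \<Rightarrow> 'a \<Rightarrow> real \<Rightarrow> real) \<Rightarrow> bool" where
  "P5 X P \<longleftrightarrow> (\<forall>a\<in>X. \<forall>b\<in>X. continuous_on {0<..} (P a b))"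

definition pball :: "'a set \<Rightarrow> ('a \<Rightarrow> 'a \<Rightarrow> real \<Rightarrow> real) \<Rightarrow> 'a \<Rightarrow> real \<Rightarrow> real \<Rightarrow> 'a set" where
  "pball X P a \<alpha> t = {b\<in>X. P a b t < \<alpha>}"

definition tauP :: "'a set \<Rightarrow> ('a \<Rightarrow> 'a \<Rightarrow> real \<Rightarrow> real) \<Rightarrow> 'a set set" where
  "tauP X P = {A. A \<subseteq> X \<and> (\<forall>a\<in>A. \<exists>\<alpha>>0. \<exists>t>0. pball X P a \<alpha> t \<subseteq> A)}"

end

theory Submission
  imports Defs
begin

theorem mainTheorem2:
  fixes X :: "'a set" and P :: "'a \<Rightarrow> 'a \<Rightarrow> real \<Rightarrow> real" and opr :: "real \<Rightarrow> real \<Rightarrow> real"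
  assumes "gen_parametric_metric X P opr"
    and "P5 X P"
    and "op_continuous opr"
    and "a \<in> X" and "\<alpha> > 0" and "t > 0"
  shows "pball X P a \<alpha> t \<in> tauP X P"
proof -
  have GO: "gen_op opr" and GP1: "\<forall>a\<in>X. \<forall>b\<in>X. \<forall>t>0. P a b t \<ge> 0"
    and GP2: "\<forall>a\<in>X. \<forall>b\<in>X. \<forall>t>0. P a b t = P b a t"
    and GP3: "\<forall>a\<in>X. \<forall>b\<in>X. \<forall>x\<in>X. \<forall>s>0. \<forall>t>0. P a b (s + t) \<le> opr (P a x s) (P b x t)"
    using assms(1) unfolding gen_parametric_metric_def by auto
  note G = GO[unfolded gen_op_def]
  have pos: "\<And>x y s. x \<in> X \<Longrightarrow> y \<in> X \<Longrightarrow> s > 0 \<Longrightarrow> P x y s \<ge> 0" using GP1 by blast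
  have sym: "\<And>x y s. x \<in> X \<Longrightarrow> y \<in> X \<Longrightarrow> s > 0 \<Longrightarrow> P x y s = P y x s" using GP2 by blast
  have tri: "\<And>x y z s r. x \<in> X \<Longrightarrow> y \<in> X \<Longrightarrow> z \<in> X \<Longrightarrow> s > 0 \<Longrightarrow> r > 0 \<Longrightarrow>
      P x y (s + r) \<le> opr (P x z s) (P y z r)" using GP3 by blast
  have op0: "\<And>x. x \<ge> 0 \<Longrightarrow> opr x 0 = x" using G by simp
  have opnn: "\<And>x y. x \<ge> 0 \<Longrightarrow> y \<ge> 0 \<Longrightarrow> opr x y \<ge> 0" using G by simp
  have opmono: "\<And>x y z. x \<ge> 0 \<Longrightarrow> y \<ge> 0 \<Longrightarrow> z \<ge> 0 \<Longrightarrow> x \<le> y \<Longrightarrow> opr x z \<le> opr y z"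
    using G by simp
  have opcomm: "\<And>x y. x \<ge> 0 \<Longrightarrow> y \<ge> 0 \<Longrightarrow> opr x y = opr y x" using G by simp
  have opmono2: "\<And>x y z. x \<ge> 0 \<Longrightarrow> y \<ge> 0 \<Longrightarrow> z \<ge> 0 \<Longrightarrow> y \<le> z \<Longrightarrow> opr x y \<le> opr x z"
    using opmono opcomm by metis
  have "\<forall>b\<in>pball X P a \<alpha> t. \<exists>\<beta>>0. \<exists>s>0. pball X P b \<beta> s \<subseteq> pball X P a \<alpha> t"
  proof
    fix b assume b: "b \<in> pball X P a \<alpha> t"
    hence bX: "b \<in> X" and lt: "P a b t < \<alpha>" by (auto simp: pball_def)
    have cont: "continuous_on {0<..} (P a b)" using assms(2) assms(4) bX by (auto simp: P5_def)
    define g where "g n = t - t / (real n + 2)" for n :: nat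
    have gpos: "g n > 0" for n
    proof -
      have "t / (real n + 2) < t" using assms(6) by (simp add: divide_less_eq)
      thus ?thesis by (simp add: g_def)
    qed
    have "(\<lambda>n. t / (real n + 2)) \<longlonglongrightarrow> 0"
    proof -
      have "(\<lambda>n. t / (real (n+2))) \<longlonglongrightarrow> 0"
        using LIMSEQ_ignore_initial_segment[OF lim_const_over_n[of t], of 2] by simp
      thus ?thesis by (simp add: add.commute)
    qed
    hence "g \<longlonglongrightarrow> t - 0" unfolding g_def by (intro tendsto_diff tendsto_const)
    hence gt: "g \<longlonglongrightarrow> t" by simp
    have "(\<lambda>n. P a b (g n)) \<longlonglongrightarrow> P a b t"
      by (rule continuous_on_tendsto_compose[OF cont gt]) (use assms(6) gpos in auto)
    hence "eventually (\<lambda>n. P a b (g n) < \<alpha>) sequentially" using lt by (rule order_tendstoD)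
    then obtain n where hn: "P a b (g n) < \<alpha>" by (auto simp: eventually_sequentially)
    define t1 where "t1 = g n"
    define t2 where "t2 = t / (real n + 2)"
    have t1: "t1 > 0" using gpos t1_def by simp
    have t2: "t2 > 0" using assms(6) by (simp add: t2_def)
    have tt: "t1 + t2 = t" by (simp add: t1_def t2_def g_def)
    define x where "x = P a b t1"
    have x0: "x \<ge> 0" using pos[OF assms(4) bX t1] x_def by simp
    have xa: "x < \<alpha>" using hn x_def t1_def by simp
    have "(\<lambda>m. opr x (1 / (real m + 1))) \<longlonglongrightarrow> opr x 0"
      using assms(3)[unfolded op_continuous_def, rule_format, of "\<lambda>_. x" "\<lambda>m. 1 / (real m + 1)" x 0]
        x0 LIMSEQ_inverse_real_of_nat by (simp add: inverse_eq_divide add.commute)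
    hence "(\<lambda>m. opr x (1 / (real m + 1))) \<longlonglongrightarrow> x" using op0 x0 by simp
    hence "eventually (\<lambda>m. opr x (1 / (real m + 1)) < \<alpha>) sequentially" using xa by (rule order_tendstoD)
    then obtain m where hm: "opr x (1 / (real m + 1)) < \<alpha>" by (auto simp: eventually_sequentially)
    define \<beta> where "\<beta> = 1 / (real m + 1)"
    have \<beta>: "\<beta> > 0" by (simp add: \<beta>_def)
    have "pball X P b \<beta> t2 \<subseteq> pball X P a \<alpha> t"
    proof
      fix c assume c: "c \<in> pball X P b \<beta> t2"
      hence cX: "c \<in> X" and cl: "P b c t2 < \<beta>" by (auto simp: pball_def)
      have y0: "P c b t2 \<ge> 0" using pos[OF cX bX t2] .
      have "P a c t = P a c (t1 + t2)" using tt by simp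
      also have "\<dots> \<le> opr (P a b t1) (P c b t2)" using tri[OF assms(4) cX bX t1 t2] .
      also have "\<dots> \<le> opr x \<beta>"
        using opmono2[OF x0 y0, of \<beta>] \<beta> cl sym[OF bX cX t2] x_def by simp
      also have "\<dots> < \<alpha>" using hm \<beta>_def by simp
      finally show "c \<in> pball X P a \<alpha> t" using cX by (simp add: pball_def)
    qed
    thus "\<exists>\<beta>>0. \<exists>s>0. pball X P b \<beta> s \<subseteq> pball X P a \<alpha> t" using \<beta> t2 by blast
  qed
  thus ?thesis unfolding tauP_def by (auto simp: pball_def)
qed

end
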